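(* For every $p>1$ there is a constant $c(p)$ such that the following holds. Let $0<R<2$ and $f\in L^p(-R,R)$, and define for $(x,y)\in\mathbb{R}^2$ $$g(x,y)=\int_{B_R}\frac{f(y_1)}{|(x,y)-(x_1,y_1)|}\,dx_1\,dy_1 ,$$ where $B_R\subset\mathbb{R}^2$ is the disk of radius $R$ centered at the origin. Then $$|g(x,y)|\le c(p)\,R\Big[\int_{-1}^1|f(Ry_1)|^p\,dy_1\Big]^{1/p}.$$ *)

theory Defs
  imports "HOL-Analysis.Analysis"
begin

end

theory Submission
  imports Defs "HOL-Analysis.Analysis"
begin


lemma abs_powr_has_int:
  fixes e R :: real
  assumes "0 \<le> e" "e < 1" "0 \<le> R"
  shows "((\<lambda>s. \<bar>s\<bar> powr -e) has_integral (2 * (R powr (1-e) / (1-e)))) {-R..R}"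
proof -
  have h0: "((\<lambda>s. s powr -e) has_integral (R powr (1-e) / (1-e))) {0..R}"
    using has_integral_powr_from_0[of "-e" R] assms by simp
  have h1: "((\<lambda>s. \<bar>s\<bar> powr -e) has_integral (R powr (1-e) / (1-e))) {0..R}"
    by (rule has_integral_eq[OF _ h0]) auto
  have h2: "((\<lambda>s. \<bar>s\<bar> powr -e) has_integral (R powr (1-e) / (1-e))) {-R..0}"
    using has_integral_reflect_lemma_real[OF h1] by simp
  show ?thesis
    using has_integral_combine[OF _ _ h2 h1] assms by (simp only: mult_2)
qed

lemma nn_abs_powr:
  fixes e R :: real
  assumes "0 \<le> e" "e < 1" "0 \<le> R"
  shows "(\<integral>\<^sup>+s. ennreal (indicator {-R..R} s * \<bar>s\<bar> powr -e) \<partial>lborel) = ennreal (2 * (R powr (1-e) / (1-e)))"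
  using nn_integral_has_integral_lebesgue[OF _ abs_powr_has_int[OF assms]] by simp

lemma nn_shift_powr:
  fixes e R c :: real
  assumes "0 \<le> e" "e < 1" "0 < R"
  shows "(\<integral>\<^sup>+t. ennreal (indicator {-R..R} t * \<bar>c - t\<bar> powr -e) \<partial>lborel) \<le> ennreal ((2/(1-e) + 2) * R powr (1-e))"
proof -
  have pt: "ennreal (indicator {-R..R} t * \<bar>c - t\<bar> powr -e) \<le>
     ennreal (indicator {c-R..c+R} t * \<bar>c - t\<bar> powr -e) + ennreal (indicator {-R..R} t * R powr -e)" for t
  proof -
    have "indicator {-R..R} t * \<bar>c - t\<bar> powr -e \<le> indicator {c-R..c+R} t * \<bar>c - t\<bar> powr -e + indicator {-R..R} t * R powr -e"
    proof (cases "t \<in> {-R..R}")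
      case True
      show ?thesis
      proof (cases "\<bar>c - t\<bar> \<le> R")
        case True
        then have "t \<in> {c-R..c+R}" by auto
        then show ?thesis using \<open>t \<in> {-R..R}\<close> by simp
      next
        case False
        then have "\<bar>c - t\<bar> powr -e \<le> R powr -e"
          using assms by (intro powr_mono2') auto
        then show ?thesis using \<open>t \<in> {-R..R}\<close> by (simp add: indicator_def)
      qed
    next
      case False
      then have "indicator {-R..R} t = (0::real)" by simp
      then show ?thesis by simp
    qed
    then show ?thesis
      by (simp add: ennreal_plus[symmetric] del: ennreal_plus)
  qed
  have "(\<integral>\<^sup>+t. ennreal (indicator {-R..R} t * \<bar>c - t\<bar> powr -e) \<partial>lborel) \<le>
     (\<integral>\<^sup>+t. ennreal (indicator {c-R..c+R} t * \<bar>c - t\<bar> powr -e) + ennreal (indicator {-R..R} t * R powr -e) \<partial>lborel)"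
    by (intro nn_integral_mono pt)
  also have "\<dots> = (\<integral>\<^sup>+t. ennreal (indicator {c-R..c+R} t * \<bar>c - t\<bar> powr -e) \<partial>lborel) + (\<integral>\<^sup>+t. ennreal (indicator {-R..R} t * R powr -e) \<partial>lborel)"
    by (intro nn_integral_add) auto
  also have "(\<integral>\<^sup>+t. ennreal (indicator {c-R..c+R} t * \<bar>c - t\<bar> powr -e) \<partial>lborel) =
      (\<integral>\<^sup>+s. ennreal (indicator {c-R..c+R} (c + 1 * s) * \<bar>c - (c + 1 * s)\<bar> powr -e) \<partial>lborel)"
    by (subst nn_integral_real_affine[where c=1 and t=c]) auto
  also have "\<dots> = (\<integral>\<^sup>+s. ennreal (indicator {-R..R} s * \<bar>s\<bar> powr -e) \<partial>lborel)"
    by (intro nn_integral_cong) (auto simp: indicator_def)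
  also have "\<dots> = ennreal (2 * (R powr (1-e) / (1-e)))"
    using nn_abs_powr assms by simp
  also have "(\<integral>\<^sup>+t. ennreal (indicator {-R..R} t * R powr -e) \<partial>lborel) = ennreal (2 * R * R powr -e)"
  proof -
    have "(\<integral>\<^sup>+t. ennreal (indicator {-R..R} t * R powr -e) \<partial>lborel) = (\<integral>\<^sup>+t. ennreal (R powr -e) * indicator {-R..R} t \<partial>lborel)"
      by (intro nn_integral_cong) (auto simp: indicator_def)
    also have "\<dots> = ennreal (R powr -e) * emeasure lborel {-R..R}"
      by (simp add: nn_integral_cmult_indicator)
    also have "\<dots> = ennreal (2 * R * R powr -e)"
      using assms by (simp add: ennreal_mult[symmetric] mult.commute)
    finally show ?thesis .
  qed
  also have "ennreal (2 * (R powr (1-e) / (1-e))) + ennreal (2 * R * R powr -e) = ennreal ((2/(1-e) + 2) * R powr (1-e))"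
  proof -
    have "R * R powr -e = R powr (1-e)" using assms
      by (simp add: powr_diff powr_minus divide_inverse)
    then show ?thesis using assms
      by (simp add: ennreal_plus[symmetric] del: ennreal_plus) (simp add: algebra_simps)
  qed
  finally show ?thesis by simp
qed



lemma kernel_bound:
  fixes u v a b :: real
  assumes "u \<noteq> 0" "v \<noteq> 0" "0 \<le> a" "0 \<le> b" "a + b = 1"
  shows "1 / sqrt (u\<^sup>2 + v\<^sup>2) \<le> \<bar>u\<bar> powr -a * \<bar>v\<bar> powr -b"
proof -
  define m where "m = max \<bar>u\<bar> \<bar>v\<bar>"
  have mpos: "m > 0" using assms by (auto simp: m_def)
  have "\<bar>u\<bar> powr a \<le> m powr a" using assms by (intro powr_mono2) (auto simp: m_def)
  moreover have "\<bar>v\<bar> powr b \<le> m powr b" using assms by (intro powr_mono2) (auto simp: m_def)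
  ultimately have "\<bar>u\<bar> powr a * \<bar>v\<bar> powr b \<le> m powr a * m powr b"
    by (intro mult_mono) auto
  also have "\<dots> = m" using mpos assms by (simp add: powr_add[symmetric])
  also have "m \<le> sqrt (u\<^sup>2 + v\<^sup>2)"
    unfolding m_def by (auto simp: real_le_rsqrt)
  finally have le: "\<bar>u\<bar> powr a * \<bar>v\<bar> powr b \<le> sqrt (u\<^sup>2 + v\<^sup>2)" .
  have pos: "0 < \<bar>u\<bar> powr a * \<bar>v\<bar> powr b" using assms by simp
  have "1 / sqrt (u\<^sup>2 + v\<^sup>2) \<le> 1 / (\<bar>u\<bar> powr a * \<bar>v\<bar> powr b)"
  proof -
    have "sqrt (u\<^sup>2 + v\<^sup>2) > 0" using le pos by linarith
    then show ?thesis using le pos by (intro divide_left_mono) (auto intro!: mult_pos_pos)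
  qed
  also have "\<dots> = \<bar>u\<bar> powr -a * \<bar>v\<bar> powr -b"
    by (simp add: powr_minus divide_inverse)
  finally show ?thesis .
qed

lemma opt_bound:
  fixes p q A G H X :: real
  assumes p: "p > 1" and q: "q > 1" and pq: "1/p + 1/q = 1"
    and A: "A \<ge> 0" and G: "G > 0" and H: "H \<ge> 0"
    and hyp: "\<And>l. l > 0 \<Longrightarrow> X \<le> H * (l powr p * A / p + G / (q * l powr q))"
  shows "X \<le> H * A powr (1/p) * G powr (1/q)"
proof (cases "A = 0")
  case True
  show ?thesis
  proof (rule ccontr)
    assume "\<not> ?thesis"
    then have X: "X > 0" using True p by simp
    then have Hp: "H > 0" using hyp[of 1] True H
      by (cases "H = 0") auto
    define l where "l = (2 * H * G / (q * X)) powr (1/q)"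
    have lpos: "l > 0" unfolding l_def using Hp G X q by simp
    have lq: "l powr q = 2 * H * G / (q * X)" unfolding l_def
      using Hp G X q by (simp add: powr_powr)
    have "X \<le> H * (G / (q * l powr q))" using hyp[OF lpos] True by simp
    also have "\<dots> = X / 2" unfolding lq using Hp G X q by (simp add: field_simps)
    finally show False using X by simp
  qed
next
  case False
  then have Apos: "A > 0" using A by simp
  define l where "l = (G / A) powr (1 / (p + q))"
  have lpos: "l > 0" unfolding l_def using Apos G by simp
  have pqe: "p + q = p * q" using pq p q by (simp add: field_simps)
  have e1: "p / (p + q) = 1 / q" "q / (p + q) = 1 / p" using pqe p q by (simp_all add: field_simps)
  have Gs: "G = G powr (1/p) * G powr (1/q)" using G pq by (simp add: powr_add[symmetric])
  have As: "A = A powr (1/p) * A powr (1/q)" using Apos pq by (simp add: powr_add[symmetric])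
  have lp: "l powr p = G powr (1/q) / A powr (1/q)"
    unfolding l_def using e1 G Apos by (simp add: powr_powr powr_divide)
  have lq: "l powr q = G powr (1/p) / A powr (1/p)"
    unfolding l_def using e1 G Apos by (simp add: powr_powr powr_divide)
  have "l powr p * A = G powr (1/q) * A powr (1/p)"
    unfolding lp using Apos by (subst As) (simp add: field_simps)
  moreover have "G / l powr q = G powr (1/q) * A powr (1/p)"
    unfolding lq using Apos G by (subst (1) Gs) (simp add: field_simps)
  moreover have "G / (q * l powr q) = (G / l powr q) / q" by simp
  ultimately have "l powr p * A / p + G / (q * l powr q) = G powr (1/q) * A powr (1/p) * (1/p + 1/q)"
    by (simp add: algebra_simps)
  then have "l powr p * A / p + G / (q * l powr q) = G powr (1/q) * A powr (1/p)"
    using pq by simp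
  then show ?thesis using hyp[OF lpos] by (simp add: mult_ac)
qed



theorem corollary3p7:
  fixes p :: real
  assumes "p > 1"
  shows "\<exists>c::real. \<forall>(R::real) (f::real \<Rightarrow> real) (x::real) (y::real).
           0 < R \<longrightarrow> R < 2 \<longrightarrow>
           set_borel_measurable lborel {-R<..<R} f \<longrightarrow>
           set_integrable lborel {-R<..<R} (\<lambda>t. \<bar>f t\<bar> powr p) \<longrightarrow>
           \<bar>LINT z : ball (0::real \<times> real) R | lborel. f (snd z) / norm ((x, y) - z)\<bar>
             \<le> c * R * (LINT t : {-1..1} | lborel. \<bar>f (R * t)\<bar> powr p) powr (1 / p)"
proof -
  have p1: "p > 1" by fact
  define q where "q = p / (p - 1)"
  have q1: "q > 1" unfolding q_def using p1 by (simp add: field_simps)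
  have pq: "1/p + 1/q = 1" unfolding q_def using p1 by (simp add: field_simps)
  define b where "b = 1 / (2 * q)"
  define a where "a = 1 - b"
  have b0: "0 < b" "b < 1/2" unfolding b_def using q1 by (auto simp: field_simps)
  have a0: "0 \<le> a" "a < 1" "a + b = 1" unfolding a_def using b0 by auto
  have bq: "b * q = 1/2" unfolding b_def using q1 by simp
  define C where "C = (2 / (1 - a) + 2) * 6 powr (1 / q)"
  show ?thesis
  proof (intro exI[of _ C] allI impI)
    fix R :: real and f :: "real \<Rightarrow> real" and x y :: real
    assume R0: "0 < R" and R2: "R < 2"
      and fm: "set_borel_measurable lborel {-R<..<R} f"
      and fi: "set_integrable lborel {-R<..<R} (\<lambda>t. \<bar>f t\<bar> powr p)"
    define fR where "fR t = indicator {-R<..<R} t * f t" for t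
    have fR_meas[measurable]: "fR \<in> borel_measurable borel"
      using fm unfolding set_borel_measurable_def fR_def by simp
    define A where "A = (LINT t:{-R<..<R}|lborel. \<bar>f t\<bar> powr p)"
    have fRp: "\<bar>fR t\<bar> powr p = indicator {-R<..<R} t *\<^sub>R \<bar>f t\<bar> powr p" for t
      by (simp add: fR_def indicator_def)
    have intA: "integrable lborel (\<lambda>t. \<bar>fR t\<bar> powr p)"
      unfolding fRp using fi unfolding set_integrable_def .
    have A_eq: "A = (\<integral>t. \<bar>fR t\<bar> powr p \<partial>lborel)"
      unfolding fRp A_def set_lebesgue_integral_def ..
    have A0: "A \<ge> 0" unfolding A_eq by (intro integral_nonneg_AE) auto
    have nnA: "(\<integral>\<^sup>+ t. ennreal (\<bar>fR t\<bar> powr p) \<partial>lborel) = ennreal A"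
      unfolding A_eq using intA by (intro nn_integral_eq_integral) auto
    have RHS: "(LINT t:{-1..1}|lborel. \<bar>f (R*t)\<bar> powr p) = A / R"
    proof -
      have eq: "indicator {-1..1} t *\<^sub>R \<bar>f (R*t)\<bar> powr p = \<bar>fR (0 + R*t)\<bar> powr p"
        if "t \<noteq> 1" "t \<noteq> -1" for t
      proof (cases "-1 < t \<and> t < 1")
        case True
        then have "-R < R * t \<and> R * t < R" using R0
          by (metis minus_mult_right mult.right_neutral mult_less_cancel_left_pos)
        then show ?thesis using True by (simp add: fR_def indicator_def)
      next
        case False
        then have "\<not> (-R < R * t \<and> R * t < R)" using R0
          by (metis minus_mult_right mult.right_neutral mult_less_cancel_left_pos)
        then show ?thesis using False that by (auto simp: fR_def indicator_def)
      qed
      have eq': "\<bar>fR (R*t)\<bar> powr p = indicator {-1..1} t * \<bar>f (R*t)\<bar> powr p"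
        if "t \<noteq> 1" "t \<noteq> -1" for t
        using eq[OF that] by simp
      have "(LINT t:{-1..1}|lborel. \<bar>f (R*t)\<bar> powr p) = (\<integral>t. \<bar>fR (0 + R*t)\<bar> powr p \<partial>lborel)"
        unfolding set_lebesgue_integral_def
      proof (rule integral_cong_AE)
        show "(\<lambda>t. \<bar>fR (0 + R*t)\<bar> powr p) \<in> borel_measurable lborel" by simp
        show "(\<lambda>t. indicator {-1..1} t *\<^sub>R \<bar>f (R*t)\<bar> powr p) \<in> borel_measurable lborel"
          by (rule measurable_discrete_difference[where X="{-1,1}" and f="\<lambda>t. \<bar>fR (0 + R*t)\<bar> powr p"])
             (auto simp: eq')
        show "AE t in lborel. indicator {-1..1} t *\<^sub>R \<bar>f (R*t)\<bar> powr p = \<bar>fR (0 + R*t)\<bar> powr p"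
          using AE_lborel_singleton[of "1::real"] AE_lborel_singleton[of "-1::real"]
          by eventually_elim (simp add: eq')
      qed
      also have "\<dots> = (\<integral>t. \<bar>fR t\<bar> powr p \<partial>lborel) / R"
        using lborel_integral_real_affine[of R "\<lambda>t. \<bar>fR t\<bar> powr p" 0] R0 by simp
      finally show ?thesis unfolding A_eq .
    qed
    define H where "H = (2 / (1 - a) + 2) * R powr (1 - a)"
    define G where "G = (2 / (1 - 1/2) + 2) * R powr (1 - 1/2)"
    have H0: "H \<ge> 0" unfolding H_def using a0 by simp
    have G0: "G > 0" unfolding G_def using R0 by simp
    define F where "F z = indicator {-R..R} (fst z) * indicator {-R..R} (snd z) * (\<bar>fR (snd z)\<bar> / sqrt ((x - fst z)\<^sup>2 + (y - snd z)\<^sup>2))" for z :: "real \<times> real"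
    have F_meas[measurable]: "(\<lambda>z. ennreal (F z)) \<in> borel_measurable (lborel \<Otimes>\<^sub>M lborel)"
      unfolding F_def by measurable
    define X where "X = (\<integral>\<^sup>+ z. ennreal (F z) \<partial>lborel)"
    have step1: "(\<integral>\<^sup>+ z. ennreal \<bar>indicator (ball 0 R) z *\<^sub>R (f (snd z) / norm ((x, y) - z))\<bar> \<partial>lborel) \<le> X"
      unfolding X_def
    proof (intro nn_integral_mono)
      fix z :: "real \<times> real"
      show "ennreal \<bar>indicator (ball 0 R) z *\<^sub>R (f (snd z) / norm ((x, y) - z))\<bar> \<le> ennreal (F z)"
      proof (cases "z \<in> ball 0 R")
        case True
        then have nz: "norm z < R" by simp
        have "\<bar>fst z\<bar> \<le> norm z" "\<bar>snd z\<bar> \<le> norm z"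
          using norm_fst_le[where x="fst z" and y="snd z"] norm_snd_le[where x="fst z" and y="snd z"] by auto
        then have "\<bar>fst z\<bar> < R" "\<bar>snd z\<bar> < R" using nz by auto
        then have "\<bar>indicator (ball 0 R) z *\<^sub>R (f (snd z) / norm ((x, y) - z))\<bar> = F z"
          using True by (cases z) (simp add: F_def fR_def indicator_def abs_less_iff norm_Pair)
        then show ?thesis by simp
      next
        case False
        then show ?thesis by simp
      qed
    qed
    have Xit: "X = (\<integral>\<^sup>+ y1. (\<integral>\<^sup>+ x1. ennreal (F (x1, y1)) \<partial>lborel) \<partial>lborel)"
    proof -
      have "X = integral\<^sup>N (lborel \<Otimes>\<^sub>M lborel) (\<lambda>z. ennreal (F z))"
        unfolding X_def by (simp add: lborel_prod)
      also have "\<dots> = (\<integral>\<^sup>+ y1. (\<integral>\<^sup>+ x1. ennreal (F (x1, y1)) \<partial>lborel) \<partial>lborel)"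
        by (rule lborel_pair.nn_integral_snd[symmetric]) simp
      finally show ?thesis .
    qed
    have inner: "(\<integral>\<^sup>+ x1. ennreal (F (x1, y1)) \<partial>lborel) \<le> ennreal H * ennreal (\<bar>fR y1\<bar> * \<bar>y - y1\<bar> powr -b)"
      if y1: "y1 \<noteq> y" for y1
    proof -
      have "AE x1 in lborel. ennreal (F (x1, y1)) \<le> ennreal (indicator {-R..R} x1 * \<bar>x - x1\<bar> powr -a) * ennreal (\<bar>fR y1\<bar> * \<bar>y - y1\<bar> powr -b)"
        using AE_lborel_singleton[of x]
      proof eventually_elim
        case (elim x1)
        have k: "1 / sqrt ((x - x1)\<^sup>2 + (y - y1)\<^sup>2) \<le> \<bar>x - x1\<bar> powr -a * \<bar>y - y1\<bar> powr -b"
          using elim y1 a0 b0 by (intro kernel_bound) auto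
        have nrm: "norm ((x, y) - (x1, y1)) = sqrt ((x - x1)\<^sup>2 + (y - y1)\<^sup>2)"
          by (simp add: norm_Pair)
        have "F (x1, y1) \<le> indicator {-R..R} x1 * (\<bar>fR y1\<bar> * (1 / sqrt ((x - x1)\<^sup>2 + (y - y1)\<^sup>2)))"
          unfolding F_def by (auto simp: indicator_def)
        also have "\<dots> \<le> indicator {-R..R} x1 * (\<bar>fR y1\<bar> * (\<bar>x - x1\<bar> powr -a * \<bar>y - y1\<bar> powr -b))"
          using k by (intro mult_left_mono) auto
        also have "\<dots> = (indicator {-R..R} x1 * \<bar>x - x1\<bar> powr -a) * (\<bar>fR y1\<bar> * \<bar>y - y1\<bar> powr -b)"
          by (simp add: mult_ac)
        finally show ?case
          by (simp add: ennreal_mult[symmetric] del: ennreal_mult)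
      qed
      then have "(\<integral>\<^sup>+ x1. ennreal (F (x1, y1)) \<partial>lborel) \<le> (\<integral>\<^sup>+ x1. ennreal (indicator {-R..R} x1 * \<bar>x - x1\<bar> powr -a) * ennreal (\<bar>fR y1\<bar> * \<bar>y - y1\<bar> powr -b) \<partial>lborel)"
        by (rule nn_integral_mono_AE)
      also have "\<dots> = (\<integral>\<^sup>+ x1. ennreal (indicator {-R..R} x1 * \<bar>x - x1\<bar> powr -a) \<partial>lborel) * ennreal (\<bar>fR y1\<bar> * \<bar>y - y1\<bar> powr -b)"
        by (rule nn_integral_multc) simp
      also have "\<dots> \<le> ennreal H * ennreal (\<bar>fR y1\<bar> * \<bar>y - y1\<bar> powr -b)"
        unfolding H_def using nn_shift_powr[of a R x] a0 R0 by (intro mult_right_mono) auto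
      finally show ?thesis .
    qed
    have outer: "X \<le> ennreal (H * (l powr p * A / p + G / (q * l powr q)))" if l: "l > 0" for l
    proof -
      have young: "\<bar>fR y1\<bar> * \<bar>y - y1\<bar> powr -b \<le> l powr p / p * \<bar>fR y1\<bar> powr p + 1 / (q * l powr q) * (indicator {-R..R} y1 * \<bar>y - y1\<bar> powr -(1/2))" for y1
      proof (cases "y1 \<in> {-R<..<R}")
        case False
        then show ?thesis using l q1 by (auto simp: fR_def intro!: divide_nonneg_nonneg mult_nonneg_nonneg)
      next
        case True
        define s where "s = \<bar>fR y1\<bar>"
        define g where "g = \<bar>y - y1\<bar> powr -b"
        have "s * g = (l * s) * (g / l)" using l by simp
        also have "\<dots> \<le> (l * s) powr p / p + (g / l) powr q / q"
          using l p1 q1 pq by (intro Youngs_inequality) (auto simp: s_def g_def)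
        also have "(l * s) powr p = l powr p * s powr p" using l by (simp add: s_def powr_mult)
        also have "(g / l) powr q = g powr q / l powr q" using l by (simp add: g_def powr_divide)
        also have "g powr q = \<bar>y - y1\<bar> powr -(1/2)" unfolding g_def using bq
          by (simp add: powr_powr bq)
        finally show ?thesis using True by (simp add: s_def g_def indicator_def mult.commute)
      qed
      have "X \<le> (\<integral>\<^sup>+ y1. ennreal H * ennreal (\<bar>fR y1\<bar> * \<bar>y - y1\<bar> powr -b) \<partial>lborel)"
        unfolding Xit using AE_lborel_singleton[of y]
        by (intro nn_integral_mono_AE) (auto elim!: eventually_mono intro: inner)
      also have "\<dots> \<le> (\<integral>\<^sup>+ y1. ennreal (H * (l powr p / p)) * ennreal (\<bar>fR y1\<bar> powr p) + ennreal (H / (q * l powr q)) * ennreal (indicator {-R..R} y1 * \<bar>y - y1\<bar> powr -(1/2)) \<partial>lborel)"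
      proof (intro nn_integral_mono)
        fix y1
        have "H * (\<bar>fR y1\<bar> * \<bar>y - y1\<bar> powr -b) \<le> H * (l powr p / p * \<bar>fR y1\<bar> powr p + 1 / (q * l powr q) * (indicator {-R..R} y1 * \<bar>y - y1\<bar> powr -(1/2)))"
          using young[of y1] H0 by (rule mult_left_mono)
        also have "\<dots> = (H * (l powr p / p)) * \<bar>fR y1\<bar> powr p + (H / (q * l powr q)) * (indicator {-R..R} y1 * \<bar>y - y1\<bar> powr -(1/2))"
          by (simp add: algebra_simps)
        finally have "ennreal (H * (\<bar>fR y1\<bar> * \<bar>y - y1\<bar> powr -b)) \<le> ennreal ((H * (l powr p / p)) * \<bar>fR y1\<bar> powr p + (H / (q * l powr q)) * (indicator {-R..R} y1 * \<bar>y - y1\<bar> powr -(1/2)))"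
          by (rule ennreal_leI)
        also have "\<dots> = ennreal (H * (l powr p / p)) * ennreal (\<bar>fR y1\<bar> powr p) + ennreal (H / (q * l powr q)) * ennreal (indicator {-R..R} y1 * \<bar>y - y1\<bar> powr -(1/2))"
          using H0 l p1 q1 by (simp add: ennreal_plus[symmetric] ennreal_mult[symmetric] del: ennreal_plus)
        finally show "ennreal H * ennreal (\<bar>fR y1\<bar> * \<bar>y - y1\<bar> powr -b) \<le> \<dots>"
          using H0 by (simp add: ennreal_mult[symmetric] del: ennreal_mult)
      qed
      also have "\<dots> = ennreal (H * (l powr p / p)) * (\<integral>\<^sup>+ y1. ennreal (\<bar>fR y1\<bar> powr p) \<partial>lborel) + ennreal (H / (q * l powr q)) * (\<integral>\<^sup>+ y1. ennreal (indicator {-R..R} y1 * \<bar>y - y1\<bar> powr -(1/2)) \<partial>lborel)"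
        by (simp add: nn_integral_add nn_integral_cmult)
      also have "\<dots> \<le> ennreal (H * (l powr p / p)) * ennreal A + ennreal (H / (q * l powr q)) * ennreal G"
        unfolding nnA G_def using nn_shift_powr[of "1/2" R y] R0
        by (intro add_left_mono mult_left_mono) auto
      also have "\<dots> = ennreal (H * (l powr p * A / p + G / (q * l powr q)))"
        using H0 l p1 q1 A0 G0 by (simp add: ennreal_plus[symmetric] ennreal_mult[symmetric] del: ennreal_plus) (simp add: algebra_simps)
      finally show ?thesis .
    qed
    have Xfin: "X \<noteq> top" using outer[of 1] by (auto simp: top_unique)
    define xr where "xr = enn2real X"
    have Xxr: "X = ennreal xr" unfolding xr_def using Xfin by (simp add: ennreal_enn2real_if)
    have xr_bd: "xr \<le> H * A powr (1/p) * G powr (1/q)"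
    proof (rule opt_bound[OF p1 q1 pq A0 G0 H0])
      fix l :: real assume "l > 0"
      from outer[OF this] show "xr \<le> H * (l powr p * A / p + G / (q * l powr q))"
        unfolding xr_def using H0 A0 G0 q1 p1 \<open>l > 0\<close> by (intro enn2real_leI outer) (auto intro!: mult_nonneg_nonneg add_nonneg_nonneg divide_nonneg_nonneg)
    qed
    have final_eq: "H * A powr (1/p) * G powr (1/q) = C * R * (A / R) powr (1/p)"
    proof -
      have G6: "G = 6 * R powr (1/2)" unfolding G_def by simp
      have "G powr (1/q) = 6 powr (1/q) * (R powr (1/2)) powr (1/q)"
        unfolding G6 using R0 by (simp add: powr_mult)
      also have "(R powr (1/2)) powr (1/q) = R powr b"
        unfolding b_def by (simp add: powr_powr)
      finally have e1: "G powr (1/q) = 6 powr (1/q) * R powr b" .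
      have e2: "R powr (1 - a) = R powr b" unfolding a_def by simp
      have "R powr b * R powr b = R powr (b + b)" by (rule powr_add[symmetric])
      also have "b + b = 1/q" unfolding b_def by simp
      finally have e3: "R powr b * R powr b = R powr (1/q)" .
      have e4: "1/q = 1 - 1/p" using pq by simp
      have e5: "R powr (1/q) = R / R powr (1/p)"
        unfolding e4 using R0 by (simp add: powr_diff)
      have e6: "(A / R) powr (1/p) = A powr (1/p) / R powr (1/p)"
        using R0 A0 by (simp add: powr_divide)
      have "H * A powr (1/p) * G powr (1/q) = (2 / (1 - a) + 2) * 6 powr (1/q) * (R powr b * R powr b) * A powr (1/p)"
        unfolding H_def e1 e2 by (simp add: mult_ac)
      also have "\<dots> = C * (R / R powr (1/p)) * A powr (1/p)"
        unfolding e3 e5 C_def ..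
      also have "\<dots> = C * R * (A / R) powr (1/p)"
        unfolding e6 by simp
      finally show ?thesis .
    qed
    have "\<bar>LINT z : ball (0::real \<times> real) R | lborel. f (snd z) / norm ((x, y) - z)\<bar>
        \<le> (\<integral>z. \<bar>indicator (ball 0 R) z *\<^sub>R (f (snd z) / norm ((x, y) - z))\<bar> \<partial>lborel)"
      unfolding set_lebesgue_integral_def by (rule integral_abs_bound)
    also have "\<dots> \<le> H * A powr (1/p) * G powr (1/q)"
    proof (rule integral_real_bounded)
      show "0 \<le> H * A powr (1/p) * G powr (1/q)" using H0 by simp
      show "(\<integral>\<^sup>+ z. ennreal \<bar>indicator (ball 0 R) z *\<^sub>R (f (snd z) / norm ((x, y) - z))\<bar> \<partial>lborel) \<le> ennreal (H * A powr (1/p) * G powr (1/q))"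
        using step1 ennreal_leI[OF xr_bd] unfolding Xxr by (rule order_trans)
    qed
    also have "\<dots> = C * R * (LINT t : {-1..1} | lborel. \<bar>f (R * t)\<bar> powr p) powr (1 / p)"
      unfolding RHS final_eq ..
    finally show "\<bar>LINT z : ball (0::real \<times> real) R | lborel. f (snd z) / norm ((x, y) - z)\<bar>
             \<le> C * R * (LINT t : {-1..1} | lborel. \<bar>f (R * t)\<bar> powr p) powr (1 / p)" .
  qed
qed

end
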